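(* Let $\mathbf A\in\mathbb R^{n\times p}$ have columns $\mathbf a_1,\dots,\mathbf a_p$ normalized to a common norm, $\|\mathbf a_k\|_2=c$ for $k=1,\dots,p$, and let $\mathbf y\in\mathbb R^n$. Let $\mathbf w$ be a weight vector as in the context and $\Delta:=\min\{w_l-w_{l+1}: l=1,\dots,p-1\}$. Let $\widehat{\mathbf x}$ be any minimizer of $$\frac12\|\mathbf A\mathbf x-\mathbf y\|_2^2+\Omega_{\mathbf w}(\mathbf x)$$ over $\mathbf x\in\mathbb R^p$. Then for every pair of columns $(i,j)$ for which $\|\mathbf y\|_2\,\|\operatorname{sign}(\widehat x_i)\mathbf a_i-\operatorname{sign}(\widehat x_j)\mathbf a_j\|_2<\Delta$, we have $|\widehat x_i|=|\widehat x_j|$.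
   Context: $\mathbf w=(w_1,\dots,w_p)\in\mathbb R^p_+$ satisfies $w_1\ge w_2\ge\cdots\ge w_p\ge0$ and $w_1>0$. The ordered weighted $\ell_1$ (OWL) norm is $\Omega_{\mathbf w}(\mathbf x)=\sum_{i=1}^p w_i|x|_{[i]}$, where $|x|_{[i]}$ denotes the $i$-th largest component of $\mathbf x$ in magnitude. $\operatorname{sign}$ denotes the sign function. *)

theory Defs
  imports "HOL-Analysis.Analysis"
begin

text \<open>Vectors in R^m are represented as functions nat => real, of which only the
  entries with index < m matter (0-based indexing). A matrix in R^(n x p) is
  a function nat => nat => real, entry (r,k) = A r k, r < n, k < p.\<close>

definition vnorm2 :: "nat \<Rightarrow> (nat \<Rightarrow> real) \<Rightarrow> real" where
  "vnorm2 m v = sqrt (\<Sum>r<m. (v r)\<^sup>2)"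

definition matvec :: "nat \<Rightarrow> nat \<Rightarrow> (nat \<Rightarrow> nat \<Rightarrow> real) \<Rightarrow> (nat \<Rightarrow> real) \<Rightarrow> (nat \<Rightarrow> real)" where
  "matvec n p A x = (\<lambda>r. if r < n then (\<Sum>k<p. A r k * x k) else 0)"

text \<open>Magnitudes of x_0..x_(p-1) sorted in decreasing order; the i-th entry is |x|_[i+1].\<close>
definition sorted_abs_desc :: "nat \<Rightarrow> (nat \<Rightarrow> real) \<Rightarrow> real list" where
  "sorted_abs_desc p x = rev (sort (map (\<lambda>k. \<bar>x k\<bar>) [0..<p]))"

definition owl :: "nat \<Rightarrow> (nat \<Rightarrow> real) \<Rightarrow> (nat \<Rightarrow> real) \<Rightarrow> real" where
  "owl p w x = (\<Sum>i<p. w i * sorted_abs_desc p x ! i)"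

definition owl_weights :: "nat \<Rightarrow> (nat \<Rightarrow> real) \<Rightarrow> bool" where
  "owl_weights p w \<longleftrightarrow> 0 < p \<and> (\<forall>i. i + 1 < p \<longrightarrow> w (i + 1) \<le> w i)
      \<and> 0 \<le> w (p - 1) \<and> 0 < w 0"

definition owl_objective :: "nat \<Rightarrow> nat \<Rightarrow> (nat \<Rightarrow> nat \<Rightarrow> real) \<Rightarrow> (nat \<Rightarrow> real)
     \<Rightarrow> (nat \<Rightarrow> real) \<Rightarrow> (nat \<Rightarrow> real) \<Rightarrow> real" where
  "owl_objective n p A y w x =
     (1/2) * (vnorm2 n (\<lambda>r. matvec n p A x r - y r))\<^sup>2 + owl p w x"

text \<open>Delta = min { w_l - w_(l+1) : l = 1..p-1 } (0-based: l = 0..p-2).\<close>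
definition owl_gap :: "nat \<Rightarrow> (nat \<Rightarrow> real) \<Rightarrow> real" where
  "owl_gap p w = Min {w l - w (l + 1) | l. l + 1 < p}"

end

theory Submission imports Defs begin

lemma insort_map: "insort (f x) (map f L) = map f (insort_key f x L)"
  by (induct L) auto

lemma sort_map: "sort (map f xs) = map f (sort_key f xs)"
  by (induct xs) (auto simp: insort_map)

lemma sorted_rep:
  "\<exists>L. distinct L \<and> set L = {..<p} \<and> length L = p \<and>
     sorted_abs_desc p x = map (\<lambda>k. \<bar>x k\<bar>) L \<and>
     (\<forall>k l. k \<le> l \<longrightarrow> l < p \<longrightarrow> \<bar>x (L!l)\<bar> \<le> \<bar>x (L!k)\<bar>)"
proof -
  define f where "f = (\<lambda>k. \<bar>x k\<bar>)"
  define L where "L = rev (sort_key f [0..<p])"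
  have s: "sorted (map f (sort_key f [0..<p]))" by simp
  have len: "length (sort_key f [0..<p]) = p" by simp
  have mono: "\<forall>k l. k \<le> l \<longrightarrow> l < p \<longrightarrow> f (L!l) \<le> f (L!k)"
  proof (intro allI impI)
    fix k l assume "k \<le> l" "l < p"
    then have "(map f (sort_key f [0..<p])) ! (p - 1 - l) \<le> (map f (sort_key f [0..<p])) ! (p - 1 - k)"
      using sorted_nth_mono[OF s] len by simp
    then show "f (L!l) \<le> f (L!k)" unfolding L_def using \<open>k \<le> l\<close> \<open>l < p\<close> len
      by (simp add: rev_nth)
  qed
  show ?thesis
    apply (rule exI[of _ L])
    using mono unfolding L_def f_def sorted_abs_desc_def
    by (auto simp: sort_map rev_map atLeast0LessThan)
qed


lemma sum_le_top:
  fixes g :: "nat \<Rightarrow> real"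
  assumes mono: "\<forall>k l. k \<le> l \<longrightarrow> l < p \<longrightarrow> g l \<le> g k"
    and K: "K \<subseteq> {..<p}" "card K = m"
  shows "(\<Sum>k\<in>K. g k) \<le> (\<Sum>k<m. g k)"
proof -
  have fK: "finite K" using K finite_subset by blast
  define A where "A = K - {..<m}"
  define B where "B = {..<m} - K"
  have cK: "card K = card (K \<inter> {..<m}) + card A"
  proof -
    have "card (K - {..<m}) = card K - card (K \<inter> {..<m})"
      using card_Diff_subset_Int[of K "{..<m}"] fK by simp
    moreover have "card (K \<inter> {..<m}) \<le> card K" using fK by (intro card_mono) auto
    ultimately show ?thesis unfolding A_def by linarith
  qed
  have cm: "m = card (K \<inter> {..<m}) + card B"
  proof -
    have "card ({..<m} - K) = card {..<m} - card ({..<m} \<inter> K)"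
      using card_Diff_subset_Int[of "{..<m}" K] by simp
    moreover have "card ({..<m} \<inter> K) \<le> card {..<m}" by (intro card_mono) auto
    moreover have "{..<m} \<inter> K = K \<inter> {..<m}" by blast
    ultimately show ?thesis unfolding B_def by simp
  qed
  have cAB: "card A = card B" using cK cm K by simp
  have sK: "(\<Sum>k\<in>K. g k) = (\<Sum>k\<in>K \<inter> {..<m}. g k) + (\<Sum>k\<in>A. g k)"
    unfolding A_def using fK by (metis Diff_Diff_Int sum.Int_Diff inf_commute)
  have sm: "(\<Sum>k<m. g k) = (\<Sum>k\<in>K \<inter> {..<m}. g k) + (\<Sum>k\<in>B. g k)"
    unfolding B_def by (metis finite_lessThan inf_commute sum.Int_Diff)
  have "(\<Sum>k\<in>A. g k) \<le> (\<Sum>k\<in>B. g k)"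
  proof (cases "A = {}")
    case True
    then have "card B = 0" using cAB by simp
    then have "B = {}" unfolding B_def by simp
    then show ?thesis using True by simp
  next
    case False
    then obtain a where a: "a \<in> A" by blast
    then have "m \<le> a" "a < p" unfolding A_def using K by auto
    then have mp: "m < p" by simp
    have "(\<Sum>k\<in>A. g k) \<le> of_nat (card A) * g m"
      apply (rule sum_bounded_above)
      using mono K unfolding A_def by auto
    also have "\<dots> = of_nat (card B) * g m" using cAB by simp
    also have "\<dots> \<le> (\<Sum>k\<in>B. g k)"
      apply (rule sum_bounded_below)
      using mono mp unfolding B_def by auto
    finally show ?thesis .
  qed
  then show ?thesis using sK sm by simp
qed

definition topsum :: "nat \<Rightarrow> (nat \<Rightarrow> real) \<Rightarrow> nat \<Rightarrow> real" where
  "topsum p x m = (\<Sum>i<m. sorted_abs_desc p x ! i)"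

lemma topsum_ge:
  assumes K: "K \<subseteq> {..<p}" "card K = m"
  shows "(\<Sum>k\<in>K. \<bar>x k\<bar>) \<le> topsum p x m"
proof -
  obtain L where L: "distinct L" "set L = {..<p}" "length L = p"
     "sorted_abs_desc p x = map (\<lambda>k. \<bar>x k\<bar>) L"
     "\<forall>k l. k \<le> l \<longrightarrow> l < p \<longrightarrow> \<bar>x (L!l)\<bar> \<le> \<bar>x (L!k)\<bar>"
    using sorted_rep by blast
  have bij: "bij_betw ((!) L) {..<p} {..<p}" using bij_betw_nth L by metis
  define K' where "K' = {k. k < p \<and> L!k \<in> K}"
  have KK: "K = (!) L ` K'" unfolding K'_def using bij K
    by (auto simp: bij_betw_def)
  have inj: "inj_on ((!) L) K'" using bij unfolding K'_def bij_betw_def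
    by (auto intro: inj_on_subset)
  have "K' \<subseteq> {..<p}" unfolding K'_def by auto
  moreover have "card K' = m" using K KK inj card_image by metis
  ultimately have "(\<Sum>k\<in>K'. \<bar>x (L!k)\<bar>) \<le> (\<Sum>k<m. \<bar>x (L!k)\<bar>)"
    using sum_le_top[of p "\<lambda>k. \<bar>x (L!k)\<bar>"] L(5) by blast
  moreover have "(\<Sum>k\<in>K. \<bar>x k\<bar>) = (\<Sum>k\<in>K'. \<bar>x (L!k)\<bar>)"
    unfolding KK using sum.reindex[OF inj] by simp
  moreover have "m \<le> p" using K card_mono[of "{..<p}" K] by simp
  moreover then have "topsum p x m = (\<Sum>k<m. \<bar>x (L!k)\<bar>)"
    unfolding topsum_def L(4) using L(3) by (intro sum.cong) auto
  ultimately show ?thesis by simp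
qed

lemma topsum_attained:
  assumes "m \<le> p"
  shows "\<exists>K. K \<subseteq> {..<p} \<and> card K = m \<and> topsum p x m = (\<Sum>k\<in>K. \<bar>x k\<bar>)"
proof -
  obtain L where L: "distinct L" "set L = {..<p}" "length L = p"
     "sorted_abs_desc p x = map (\<lambda>k. \<bar>x k\<bar>) L"
    using sorted_rep by blast
  have inj: "inj_on ((!) L) {..<m}" using L assms
    by (intro inj_onI) (simp add: nth_eq_iff_index_eq)
  have sub: "(!) L ` {..<m} \<subseteq> {..<p}" using L assms by (auto simp flip: L(2))
  have "topsum p x m = (\<Sum>k<m. \<bar>x (L!k)\<bar>)"
    unfolding topsum_def L(4) using L(3) assms by (intro sum.cong) auto
  also have "\<dots> = (\<Sum>k\<in>(!) L ` {..<m}. \<bar>x k\<bar>)"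
    using sum.reindex[OF inj, of "\<lambda>k. \<bar>x k\<bar>"] by simp
  finally show ?thesis using sub card_image[OF inj] by auto
qed

lemma sorted_nonneg: "i < p \<Longrightarrow> 0 \<le> sorted_abs_desc p x ! i"
proof -
  assume i: "i < p"
  obtain L where L: "distinct L" "set L = {..<p}" "length L = p"
     "sorted_abs_desc p x = map (\<lambda>k. \<bar>x k\<bar>) L"
     "\<forall>k l. k \<le> l \<longrightarrow> l < p \<longrightarrow> \<bar>x (L!l)\<bar> \<le> \<bar>x (L!k)\<bar>"
    using sorted_rep by blast
  show ?thesis using i L by simp
qed

lemma sorted_zero: "i < p \<Longrightarrow> sorted_abs_desc p (\<lambda>_. 0) ! i = 0"
proof -
  assume i: "i < p"
  obtain L where L: "distinct L" "set L = {..<p}" "length L = p"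
     "sorted_abs_desc p (\<lambda>_. 0::real) = map (\<lambda>k. \<bar>(\<lambda>_. 0::real) k\<bar>) L"
     "\<forall>k l. k \<le> l \<longrightarrow> l < p \<longrightarrow> \<bar>(\<lambda>_. 0::real) (L!l)\<bar> \<le> \<bar>(\<lambda>_. 0::real) (L!k)\<bar>"
    using sorted_rep[of p "\<lambda>_. 0::real"] by blast
  show ?thesis using i L by simp
qed

lemma abel_gen:
  fixes w g :: "nat \<Rightarrow> real"
  shows "(\<Sum>i<q. w i * g i) = (\<Sum>m<q. (w m - w (m+1)) * (\<Sum>i<m+1. g i)) + w q * (\<Sum>i<q. g i)"
  by (induct q) (auto simp: algebra_simps)

lemma owl_abel:
  assumes "0 < p"
  shows "owl p w x = (\<Sum>m<p-1. (w m - w (m+1)) * topsum p x (m+1)) + w (p-1) * topsum p x p"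
proof -
  obtain q where q: "p = Suc q" using assms not0_implies_Suc by blast
  have "owl p w x = (\<Sum>m<q. (w m - w (m+1)) * topsum p x (m+1)) + w q * topsum p x q
       + w q * sorted_abs_desc p x ! q"
    unfolding owl_def topsum_def q using abel_gen[of w "\<lambda>i. sorted_abs_desc (Suc q) x ! i" q]
    by simp
  then show ?thesis unfolding q topsum_def by (simp add: algebra_simps)
qed


lemma owl_transfer:
  fixes x z :: "nat \<Rightarrow> real"
  assumes wts: "owl_weights p w"
    and ij: "i < p" "j < p" "i \<noteq> j"
    and a: "\<bar>x j\<bar> < \<bar>x i\<bar>"
    and eps: "0 < \<epsilon>"
    and gap: "\<forall>k<p. \<bar>x k\<bar> < \<bar>x i\<bar> \<longrightarrow> \<bar>x k\<bar> \<le> \<bar>x i\<bar> - 2*\<epsilon>"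
    and zi: "\<bar>z i\<bar> = \<bar>x i\<bar> - \<epsilon>"
    and zj: "\<bar>z j\<bar> \<le> \<bar>x j\<bar> + \<epsilon>"
    and zk: "\<forall>k<p. k \<noteq> i \<longrightarrow> k \<noteq> j \<longrightarrow> \<bar>z k\<bar> = \<bar>x k\<bar>"
  shows "owl p w z \<le> owl p w x - \<epsilon> * owl_gap p w"
proof -
  have bnd: "\<bar>z k\<bar> \<le> \<bar>x k\<bar> + (if k = j then \<epsilon> else 0) - (if k = i then \<epsilon> else 0)"
    if "k < p" for k
    using zi zj zk that ij by auto
  have sumK: "(\<Sum>k\<in>K. \<bar>z k\<bar>) \<le> (\<Sum>k\<in>K. \<bar>x k\<bar>) + (if j \<in> K then \<epsilon> else 0) - (if i \<in> K then \<epsilon> else 0)"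
    if K: "K \<subseteq> {..<p}" for K
  proof -
    have fK: "finite K" using K finite_subset by blast
    have "(\<Sum>k\<in>K. \<bar>z k\<bar>) \<le> (\<Sum>k\<in>K. \<bar>x k\<bar> + (if k = j then \<epsilon> else 0) - (if k = i then \<epsilon> else 0))"
      using bnd K by (intro sum_mono) (meson lessThan_iff subsetD)
    also have "\<dots> = (\<Sum>k\<in>K. \<bar>x k\<bar>) + (\<Sum>k\<in>K. (if k = j then \<epsilon> else 0)) - (\<Sum>k\<in>K. (if k = i then \<epsilon> else 0))"
      by (simp add: sum.distrib sum_subtractf)
    also have "\<dots> = (\<Sum>k\<in>K. \<bar>x k\<bar>) + (if j \<in> K then \<epsilon> else 0) - (if i \<in> K then \<epsilon> else 0)"
      using fK by (simp add: sum.delta)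
    finally show ?thesis .
  qed
  have eab: "\<epsilon> \<le> \<bar>x i\<bar> - \<bar>x j\<bar>" using gap a ij eps by force
  have le_all: "topsum p z m \<le> topsum p x m" if m: "m \<le> p" for m
  proof -
    obtain K where K: "K \<subseteq> {..<p}" "card K = m" "topsum p z m = (\<Sum>k\<in>K. \<bar>z k\<bar>)"
      using topsum_attained[OF m] by blast
    have fK: "finite K" using K finite_subset by blast
    show ?thesis
    proof (cases "j \<in> K \<and> i \<notin> K")
      case True
      define K' where "K' = insert i (K - {j})"
      have K'1: "K' \<subseteq> {..<p}" using K ij unfolding K'_def by auto
      have K'2: "card K' = m" using True fK K unfolding K'_def
        by (simp add: card.insert_remove) (metis Suc_pred card_gt_0_iff empty_iff)
      have "(\<Sum>k\<in>K'. \<bar>x k\<bar>) = \<bar>x i\<bar> + ((\<Sum>k\<in>K. \<bar>x k\<bar>) - \<bar>x j\<bar>)"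
        unfolding K'_def using True fK by (simp add: sum_diff1)
      moreover have "(\<Sum>k\<in>K. \<bar>z k\<bar>) \<le> (\<Sum>k\<in>K. \<bar>x k\<bar>) + \<epsilon>" using sumK[OF K(1)] True by simp
      moreover have "(\<Sum>k\<in>K'. \<bar>x k\<bar>) \<le> topsum p x m" using topsum_ge[OF K'1 K'2] .
      ultimately show ?thesis using K(3) eab by linarith
    next
      case False
      then have "(\<Sum>k\<in>K. \<bar>z k\<bar>) \<le> (\<Sum>k\<in>K. \<bar>x k\<bar>)" using sumK[OF K(1)] eps by (auto split: if_splits)
      then show ?thesis using K(3) topsum_ge[OF K(1) K(2), of x] by linarith
    qed
  qed
  define T where "T = {k. k < p \<and> \<bar>x i\<bar> \<le> \<bar>x k\<bar>}"
  define m where "m = card T"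
  have T1: "T \<subseteq> {..<p}" unfolding T_def by auto
  have iT: "i \<in> T" "j \<notin> T" using ij a unfolding T_def by auto
  have fT: "finite T" using T1 finite_subset by blast
  have m1: "1 \<le> m" unfolding m_def using iT fT by (metis One_nat_def Suc_leI card_gt_0_iff empty_iff)
  have mp: "m < p"
  proof -
    have "T \<subset> {..<p}" using T1 iT ij by auto
    then show ?thesis unfolding m_def by (metis card_lessThan finite_lessThan psubset_card_mono)
  qed
  have strict: "topsum p z m \<le> topsum p x m - \<epsilon>"
  proof -
    obtain K where K: "K \<subseteq> {..<p}" "card K = m" "topsum p z m = (\<Sum>k\<in>K. \<bar>z k\<bar>)"
      using topsum_attained[of m p z] mp by auto
    have fK: "finite K" using K finite_subset by blast
    have Tx: "(\<Sum>k\<in>T. \<bar>x k\<bar>) \<le> topsum p x m" using topsum_ge[OF T1] m_def by simp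
    show ?thesis
    proof (cases "K = T")
      case True
      then show ?thesis using sumK[OF K(1)] iT K(3) Tx by auto
    next
      case False
      have z1: "(\<Sum>k\<in>K. \<bar>z k\<bar>) \<le> (\<Sum>k\<in>K. \<bar>x k\<bar>) + \<epsilon>" using sumK[OF K(1)] eps by (auto split: if_splits)
      define A where "A = K - T"
      define B where "B = T - K"
      have cK: "card K = card (K \<inter> T) + card A"
      proof -
        have "card (K - T) = card K - card (K \<inter> T)"
          using card_Diff_subset_Int[of K T] fK by simp
        moreover have "card (K \<inter> T) \<le> card K" using fK by (intro card_mono) auto
        ultimately show ?thesis unfolding A_def by linarith
      qed
      have cT: "card T = card (K \<inter> T) + card B"
      proof -
        have "card (T - K) = card T - card (T \<inter> K)"
          using card_Diff_subset_Int[of T K] fT by simp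
        moreover have "card (T \<inter> K) \<le> card T" using fT by (intro card_mono) auto
        moreover have "T \<inter> K = K \<inter> T" by blast
        ultimately show ?thesis unfolding B_def by simp
      qed
      have cAB: "card A = card B" using cK cT K m_def by simp
      have "A \<noteq> {}"
      proof
        assume "A = {}"
        then have "card B = 0" using cAB by simp
        then have "B = {}" unfolding B_def using fT by simp
        then show False using \<open>A = {}\<close> False unfolding A_def B_def by blast
      qed
      then have cA1: "1 \<le> card A" unfolding A_def using fK
        by (metis One_nat_def Suc_leI card_gt_0_iff finite_Diff)
      have sK: "(\<Sum>k\<in>K. \<bar>x k\<bar>) = (\<Sum>k\<in>K \<inter> T. \<bar>x k\<bar>) + (\<Sum>k\<in>A. \<bar>x k\<bar>)"
        unfolding A_def using fK by (metis sum.Int_Diff)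
      have sT: "(\<Sum>k\<in>T. \<bar>x k\<bar>) = (\<Sum>k\<in>K \<inter> T. \<bar>x k\<bar>) + (\<Sum>k\<in>B. \<bar>x k\<bar>)"
        unfolding B_def using fT by (metis sum.Int_Diff inf_commute)
      have "(\<Sum>k\<in>A. \<bar>x k\<bar>) \<le> of_nat (card A) * (\<bar>x i\<bar> - 2*\<epsilon>)"
        apply (rule sum_bounded_above)
        using gap K(1) unfolding A_def T_def by auto
      moreover have "of_nat (card B) * \<bar>x i\<bar> \<le> (\<Sum>k\<in>B. \<bar>x k\<bar>)"
        apply (rule sum_bounded_below)
        unfolding B_def T_def by auto
      moreover have "2 * \<epsilon> \<le> of_nat (card A) * (2 * \<epsilon>)" using cA1 eps by simp
      ultimately have "(\<Sum>k\<in>K. \<bar>x k\<bar>) \<le> (\<Sum>k\<in>T. \<bar>x k\<bar>) - 2 * \<epsilon>"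
        using sK sT cAB by (simp add: algebra_simps)
      then show ?thesis using z1 K(3) Tx by linarith
    qed
  qed
  have p0: "0 < p" using ij by simp
  have wmono: "w (k+1) \<le> w k" if "k + 1 < p" for k using wts that unfolding owl_weights_def by blast
  have wlast: "0 \<le> w (p-1)" using wts unfolding owl_weights_def by blast
  define m0 where "m0 = m - 1"
  have m0: "m0 < p - 1" "m0 + 1 = m" using m1 mp unfolding m0_def by auto
  have fin: "finite {w l - w (l + 1) |l. l + 1 < p}"
  proof -
    have "{w l - w (l + 1) |l. l + 1 < p} \<subseteq> (\<lambda>l. w l - w (l+1)) ` {..<p}" by auto
    then show ?thesis using finite_surj by blast
  qed
  have gapm0: "owl_gap p w \<le> w m0 - w (m0+1)"
    unfolding owl_gap_def using m0 fin by (intro Min_le) auto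
  define D where "D = (\<lambda>m. (w m - w (m+1)) * (topsum p x (m+1) - topsum p z (m+1)))"
  have Dnn: "0 \<le> D m" if "m < p - 1" for m
    unfolding D_def using wmono[of m] le_all[of "m+1"] that by (intro mult_nonneg_nonneg) auto
  have "\<epsilon> * owl_gap p w \<le> D m0"
  proof -
    have "\<epsilon> * owl_gap p w \<le> \<epsilon> * (w m0 - w (m0+1))" using gapm0 eps by simp
    also have "\<dots> \<le> (w m0 - w (m0+1)) * (topsum p x (m0+1) - topsum p z (m0+1))"
    proof -
      have "0 \<le> w m0 - w (m0+1)" using m0 wmono[of m0] by simp
      moreover have "\<epsilon> \<le> topsum p x (m0+1) - topsum p z (m0+1)" using strict m0 by simp
      ultimately show ?thesis by (metis mult.commute mult_left_mono)
    qed
    finally show ?thesis unfolding D_def .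
  qed
  also have "D m0 \<le> (\<Sum>m<p-1. D m)"
    using Dnn m0 by (intro member_le_sum) auto
  also have "\<dots> \<le> (\<Sum>m<p-1. D m) + w (p-1) * (topsum p x p - topsum p z p)"
    using wlast le_all[of p] by simp
  also have "\<dots> = owl p w x - owl p w z"
  proof -
    have "(\<Sum>m<p-1. D m) = (\<Sum>m<p-1. (w m - w (m+1)) * topsum p x (m+1)) - (\<Sum>m<p-1. (w m - w (m+1)) * topsum p z (m+1))"
      unfolding D_def by (simp add: right_diff_distrib sum_subtractf)
    then show ?thesis unfolding owl_abel[OF p0] by (simp add: algebra_simps)
  qed
  finally show ?thesis by simp
qed


lemma w_antimono:
  fixes i l p :: nat
  assumes "\<forall>k. k + 1 < p \<longrightarrow> w (k + 1) \<le> (w k :: real)"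
  shows "i \<le> l \<Longrightarrow> l < p \<Longrightarrow> w l \<le> w i"
proof (induction l)
  case 0 then show ?case by simp
next
  case (Suc l)
  show ?case
  proof (cases "i = Suc l")
    case True then show ?thesis by simp
  next
    case False
    then have "i \<le> l" using Suc.prems by simp
    then have "w l \<le> w i" using Suc by simp
    moreover have "w (Suc l) \<le> w l" using assms Suc.prems by (metis Suc_eq_plus1)
    ultimately show ?thesis by simp
  qed
qed

lemma owl_nonneg:
  assumes "owl_weights p w"
  shows "0 \<le> owl p w x"
proof -
  have "0 \<le> w i" if "i < p" for i
  proof -
    have "w (p-1) \<le> w i" using w_antimono[of p w i "p-1"] assms that
      unfolding owl_weights_def by auto
    then show ?thesis using assms unfolding owl_weights_def by simp
  qed
  then show ?thesis unfolding owl_def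
    by (intro sum_nonneg mult_nonneg_nonneg) (auto simp: sorted_nonneg)
qed

lemma owl_zero: "owl p w (\<lambda>_. 0) = 0"
  unfolding owl_def by (simp add: sorted_zero)

lemma vnorm2_sq: "(vnorm2 n v)\<^sup>2 = (\<Sum>r<n. (v r)\<^sup>2)"
  unfolding vnorm2_def by (simp add: sum_nonneg)

lemma vnorm2_nonneg: "0 \<le> vnorm2 n v"
  unfolding vnorm2_def by (simp add: sum_nonneg)

lemma main_half:
  fixes n p :: nat and A :: "nat \<Rightarrow> nat \<Rightarrow> real" and y w x :: "nat \<Rightarrow> real"
  assumes wts: "owl_weights p w"
    and minim: "\<forall>z. owl_objective n p A y w x \<le> owl_objective n p A y w z"
    and ij: "i < p" "j < p"
    and close: "vnorm2 n y * vnorm2 n (\<lambda>r. sgn (x j) * A r j - sgn (x i) * A r i) < owl_gap p w"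
    and lt: "\<bar>x j\<bar> < \<bar>x i\<bar>"
  shows False
proof -
  have ineq: "i \<noteq> j" using lt by auto
  define a where "a = \<bar>x i\<bar>"
  define si where "si = sgn (x i)"
  define sj where "sj = sgn (x j)"
  define d where "d = (\<lambda>r. sj * A r j - si * A r i)"
  define nd where "nd = vnorm2 n d"
  define ny where "ny = vnorm2 n y"
  define \<Delta> where "\<Delta> = owl_gap p w"
  have a0: "0 < a" unfolding a_def using lt by linarith
  have si1: "\<bar>si\<bar> = 1" unfolding si_def using a0 a_def by (simp add: abs_sgn_eq)
  have xi: "x i = si * a" unfolding si_def a_def by (simp add: sgn_mult_abs)
  have xj: "x j = sj * \<bar>x j\<bar>" unfolding sj_def by (simp add: sgn_mult_abs)
  have sjle: "\<bar>sj\<bar> \<le> 1" unfolding sj_def by (simp add: abs_sgn_eq)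
  have nd0: "0 \<le> nd" unfolding nd_def by (rule vnorm2_nonneg)
  have ny0: "0 \<le> ny" unfolding ny_def by (rule vnorm2_nonneg)
  have cpos: "0 < \<Delta> - ny * nd" using close unfolding \<Delta>_def ny_def nd_def d_def sj_def si_def by simp
  define M where "M = {\<bar>x k\<bar> | k. k < p \<and> \<bar>x k\<bar> < a}"
  have finM: "finite M"
  proof -
    have "M \<subseteq> (\<lambda>k. \<bar>x k\<bar>) ` {..<p}" unfolding M_def by auto
    then show ?thesis using finite_surj by blast
  qed
  have jM: "\<bar>x j\<bar> \<in> M" unfolding M_def a_def using ij lt by auto
  define mx where "mx = Max M"
  have mxlt: "mx < a"
  proof -
    have "Max M \<in> M" using finM jM Max_in by blast
    then show ?thesis unfolding mx_def M_def by auto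
  qed
  have mx0: "0 \<le> mx" unfolding mx_def using finM jM
    by (meson Max_ge abs_ge_zero order_trans)
  have mxge: "\<forall>k<p. \<bar>x k\<bar> < a \<longrightarrow> \<bar>x k\<bar> \<le> mx"
    unfolding mx_def M_def using finM M_def by (auto intro!: Max_ge)
  define g where "g = a - mx"
  have g0: "0 < g" unfolding g_def using mxlt by simp
  define \<epsilon> where "\<epsilon> = min (g/2) ((\<Delta> - ny * nd) / (nd\<^sup>2 + 1))"
  have e0: "0 < \<epsilon>" 
  proof -
    have "0 < nd\<^sup>2 + 1" by (metis add_pos_nonneg zero_less_one zero_le_power2 add.commute)
    then have "0 < (\<Delta> - ny * nd) / (nd\<^sup>2 + 1)" using cpos by (rule divide_pos_pos[rotated])
    then show ?thesis unfolding \<epsilon>_def using g0 by simp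
  qed
  have eg: "\<epsilon> \<le> g/2" unfolding \<epsilon>_def by (rule min.cobounded1)
  have ec: "\<epsilon> * (nd\<^sup>2 + 1) \<le> \<Delta> - ny * nd"
  proof -
    have "\<epsilon> \<le> (\<Delta> - ny * nd) / (nd\<^sup>2 + 1)" unfolding \<epsilon>_def by simp
    moreover have "0 < nd\<^sup>2 + 1" by (metis add_pos_nonneg zero_less_one zero_le_power2 add.commute)
    ultimately show ?thesis by (simp add: pos_le_divide_eq)
  qed
  have ea: "\<epsilon> < a" using eg g_def mx0 g0 by linarith
  define z where "z = (\<lambda>k. x k + (if k = j then \<epsilon> * sj else 0) - (if k = i then \<epsilon> * si else 0))"
  have zi: "\<bar>z i\<bar> = \<bar>x i\<bar> - \<epsilon>"
  proof -
    have "z i = si * (a - \<epsilon>)" unfolding z_def using ineq xi by (simp add: algebra_simps)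
    then show ?thesis using si1 ea a_def by (simp add: abs_mult)
  qed
  have zj: "\<bar>z j\<bar> \<le> \<bar>x j\<bar> + \<epsilon>"
  proof -
    have "z j = sj * (\<bar>x j\<bar> + \<epsilon>)" unfolding z_def using ineq xj by (simp add: algebra_simps)
    then have "\<bar>z j\<bar> = \<bar>sj\<bar> * (\<bar>x j\<bar> + \<epsilon>)" using e0 by (simp add: abs_mult)
    also have "\<dots> \<le> 1 * (\<bar>x j\<bar> + \<epsilon>)" using sjle e0 by (intro mult_right_mono) auto
    finally show ?thesis by simp
  qed
  have zk: "\<forall>k<p. k \<noteq> i \<longrightarrow> k \<noteq> j \<longrightarrow> \<bar>z k\<bar> = \<bar>x k\<bar>" unfolding z_def by simp
  have gap: "\<forall>k<p. \<bar>x k\<bar> < \<bar>x i\<bar> \<longrightarrow> \<bar>x k\<bar> \<le> \<bar>x i\<bar> - 2*\<epsilon>"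
    using mxge eg g_def a_def by force
  have owlz: "owl p w z \<le> owl p w x - \<epsilon> * \<Delta>"
    unfolding \<Delta>_def
    by (rule owl_transfer[OF wts ij ineq lt e0 gap zi zj zk])
  define R where "R = (\<lambda>r. matvec n p A x r - y r)"
  have Rz: "matvec n p A z r - y r = R r + \<epsilon> * d r" if "r < n" for r
  proof -
    have "(\<Sum>k<p. A r k * z k) = (\<Sum>k<p. A r k * x k) + (\<Sum>k<p. if k = j then A r k * (\<epsilon> * sj) else 0)
        - (\<Sum>k<p. if k = i then A r k * (\<epsilon> * si) else 0)"
    proof -
      have "A r k * z k = A r k * x k + (if k = j then A r k * (\<epsilon> * sj) else 0)
          - (if k = i then A r k * (\<epsilon> * si) else 0)" for k
        unfolding z_def by (simp add: algebra_simps)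
      then show ?thesis by (simp add: sum.distrib sum_subtractf)
    qed
    also have "\<dots> = (\<Sum>k<p. A r k * x k) + A r j * (\<epsilon> * sj) - A r i * (\<epsilon> * si)"
      using ij by (simp only: sum.delta finite_lessThan) simp
    finally show ?thesis unfolding R_def matvec_def d_def using that by (simp add: algebra_simps)
  qed
  have nz: "(vnorm2 n (\<lambda>r. matvec n p A z r - y r))\<^sup>2
      = (\<Sum>r<n. (R r)\<^sup>2) + 2 * \<epsilon> * (\<Sum>r<n. R r * d r) + \<epsilon>\<^sup>2 * (\<Sum>r<n. (d r)\<^sup>2)"
  proof -
    have "(vnorm2 n (\<lambda>r. matvec n p A z r - y r))\<^sup>2 = (\<Sum>r<n. (R r + \<epsilon> * d r)\<^sup>2)"
      unfolding vnorm2_sq using Rz by (intro sum.cong) auto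
    also have "\<dots> = (\<Sum>r<n. (R r)\<^sup>2 + 2 * \<epsilon> * (R r * d r) + \<epsilon>\<^sup>2 * (d r)\<^sup>2)"
      by (intro sum.cong) (auto simp: power2_eq_square algebra_simps)
    also have "\<dots> = (\<Sum>r<n. (R r)\<^sup>2) + 2 * \<epsilon> * (\<Sum>r<n. R r * d r) + \<epsilon>\<^sup>2 * (\<Sum>r<n. (d r)\<^sup>2)"
      by (simp add: sum.distrib sum_distrib_left)
    finally show ?thesis .
  qed
  define nR where "nR = vnorm2 n R"
  have CS: "(\<Sum>r<n. R r * d r) \<le> nR * nd"
  proof -
    have "(\<Sum>r<n. R r * d r) \<le> (\<Sum>r<n. \<bar>R r\<bar> * \<bar>d r\<bar>)"
      by (intro sum_mono) (metis abs_ge_self abs_mult)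
    also have "\<dots> \<le> L2_set R {..<n} * L2_set d {..<n}" by (rule L2_set_mult_ineq)
    finally show ?thesis unfolding nR_def nd_def vnorm2_def L2_set_def .
  qed
  have nRy: "nR \<le> ny"
  proof -
    have "owl_objective n p A y w x \<le> owl_objective n p A y w (\<lambda>_. 0)" using minim by blast
    moreover have "vnorm2 n (\<lambda>r. matvec n p A (\<lambda>_. 0) r - y r) = ny"
      unfolding ny_def vnorm2_def matvec_def by (intro arg_cong[where f=sqrt] sum.cong) auto
    ultimately have "(1/2) * nR\<^sup>2 + owl p w x \<le> (1/2) * ny\<^sup>2"
      unfolding owl_objective_def owl_zero nR_def R_def by simp
    then have "nR\<^sup>2 \<le> ny\<^sup>2" using owl_nonneg[OF wts, of x] by simp
    then show ?thesis using ny0 by (rule power2_le_imp_le)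
  qed
  have nR0: "0 \<le> nR" unfolding nR_def by (rule vnorm2_nonneg)
  have "owl_objective n p A y w z - owl_objective n p A y w x
      = \<epsilon> * (\<Sum>r<n. R r * d r) + \<epsilon>\<^sup>2 / 2 * nd\<^sup>2 + owl p w z - owl p w x"
    unfolding owl_objective_def nz using vnorm2_sq[of n R] vnorm2_sq[of n d]
    unfolding R_def nd_def by (simp add: algebra_simps)
  also have "\<dots> \<le> \<epsilon> * (nR * nd) + \<epsilon>\<^sup>2 / 2 * nd\<^sup>2 - \<epsilon> * \<Delta>"
  proof -
    have "\<epsilon> * (\<Sum>r<n. R r * d r) \<le> \<epsilon> * (nR * nd)" using CS e0 by (simp add: mult_left_mono)
    then show ?thesis using owlz by linarith
  qed
  also have "\<dots> \<le> \<epsilon> * (ny * nd) + \<epsilon>\<^sup>2 / 2 * nd\<^sup>2 - \<epsilon> * \<Delta>"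
    using nRy nd0 e0 by (simp add: mult_left_mono mult_right_mono)
  also have "\<dots> = \<epsilon> * (\<epsilon> * nd\<^sup>2 / 2 - (\<Delta> - ny * nd))"
    by (simp add: power2_eq_square algebra_simps)
  also have "\<dots> < 0"
  proof -
    have "\<epsilon> * nd\<^sup>2 \<le> \<epsilon> * (nd\<^sup>2 + 1)" using e0 by simp
    then have "\<epsilon> * nd\<^sup>2 / 2 < \<Delta> - ny * nd" using ec cpos by linarith
    then show ?thesis using e0 by (simp add: mult_pos_neg)
  qed
  finally show False using minim[rule_format, of z] by linarith
qed

theorem theorem2:
  fixes n p :: nat and A :: "nat \<Rightarrow> nat \<Rightarrow> real" and y w xh :: "nat \<Rightarrow> real" and c :: real
  assumes cols: "\<forall>k<p. vnorm2 n (\<lambda>r. A r k) = c"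
    and wts: "owl_weights p w"
    and minim: "\<forall>x. owl_objective n p A y w xh \<le> owl_objective n p A y w x"
    and ij: "i < p" "j < p"
    and close: "vnorm2 n y * vnorm2 n (\<lambda>r. sgn (xh i) * A r i - sgn (xh j) * A r j) < owl_gap p w"
  shows "\<bar>xh i\<bar> = \<bar>xh j\<bar>"
proof (rule ccontr)
  assume ne: "\<bar>xh i\<bar> \<noteq> \<bar>xh j\<bar>"
  have sym: "vnorm2 n (\<lambda>r. sgn (xh j) * A r j - sgn (xh i) * A r i)
     = vnorm2 n (\<lambda>r. sgn (xh i) * A r i - sgn (xh j) * A r j)"
    unfolding vnorm2_def by (intro arg_cong[where f=sqrt] sum.cong) (auto simp: power2_commute)
  show False
  proof (cases "\<bar>xh j\<bar> < \<bar>xh i\<bar>")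
    case True
    show False using main_half[OF wts minim ij _ True] close sym by simp
  next
    case False
    then have lt: "\<bar>xh i\<bar> < \<bar>xh j\<bar>" using ne by simp
    show False using main_half[OF wts minim ij(2) ij(1) _ lt] close by simp
  qed
qed

end
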